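(* Let $q>1$, let $\Omega\subset\mathbb R^N$ be a domain, and let $u\in C^{2,1}(\Omega\times(0,\infty))$ be a large initial solution of $\partial_tu-\Delta u+u^q=0$ in $\Omega\times(0,\infty)$. Then for every bounded open set $G$ with $\overline G\subset\Omega$, $$\lim_{t\to0}t^{1/(q-1)}u(x,t)=c_q:=\Big(\frac1{q-1}\Big)^{1/(q-1)}\quad\text{uniformly in }x\in G.$$
   Context: A large initial solution is a positive function $u\in C^{2,1}(\Omega\times(0,\infty))$ solving $\partial_tu-\Delta u+u^q=0$ in $\Omega\times(0,\infty)$ such that $\lim_{t\to0}u(x,t)=\infty$ uniformly on every compact subset of $\Omega$. *)

theory Defs
  imports "HOL-Analysis.Analysis"
begin

text \<open>Points of R^N are modelled as real^'n (N = CARD('n)); u x t is u at (x,t).\<close>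

definition dt :: "(real ^ 'n::finite \<Rightarrow> real \<Rightarrow> real) \<Rightarrow> real ^ 'n \<Rightarrow> real \<Rightarrow> real" where
  "dt u x t = deriv (\<lambda>s. u x s) t"

definition dx :: "'n::finite \<Rightarrow> (real ^ 'n \<Rightarrow> real \<Rightarrow> real) \<Rightarrow> real ^ 'n \<Rightarrow> real \<Rightarrow> real" where
  "dx i u x t = deriv (\<lambda>h. u (x + h *\<^sub>R axis i 1) t) 0"

definition laplacian :: "(real ^ 'n::finite \<Rightarrow> real \<Rightarrow> real) \<Rightarrow> real ^ 'n \<Rightarrow> real \<Rightarrow> real" where
  "laplacian u x t = (\<Sum>i\<in>UNIV. dx i (dx i u) x t)"

definition C21 :: "(real ^ 'n::finite) set \<Rightarrow> (real ^ 'n \<Rightarrow> real \<Rightarrow> real) \<Rightarrow> bool" where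
  "C21 \<Omega> u \<longleftrightarrow>
     (\<forall>x\<in>\<Omega>. \<forall>t>0.
        (\<lambda>s. u x s) differentiable (at t) \<and>
        (\<forall>i. (\<lambda>h. u (x + h *\<^sub>R axis i 1) t) differentiable (at 0)) \<and>
        (\<forall>i j. (\<lambda>h. dx i u (x + h *\<^sub>R axis j 1) t) differentiable (at 0))) \<and>
     continuous_on (\<Omega> \<times> {0<..}) (\<lambda>(x,t). u x t) \<and>
     continuous_on (\<Omega> \<times> {0<..}) (\<lambda>(x,t). dt u x t) \<and>
     (\<forall>i. continuous_on (\<Omega> \<times> {0<..}) (\<lambda>(x,t). dx i u x t)) \<and>
     (\<forall>i j. continuous_on (\<Omega> \<times> {0<..}) (\<lambda>(x,t). dx j (dx i u) x t))"

definition large_initial_solution ::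
    "real \<Rightarrow> (real ^ 'n::finite) set \<Rightarrow> (real ^ 'n \<Rightarrow> real \<Rightarrow> real) \<Rightarrow> bool" where
  "large_initial_solution q \<Omega> u \<longleftrightarrow>
     C21 \<Omega> u \<and>
     (\<forall>x\<in>\<Omega>. \<forall>t>0. u x t > 0) \<and>
     (\<forall>x\<in>\<Omega>. \<forall>t>0. dt u x t - laplacian u x t + u x t powr q = 0) \<and>
     (\<forall>K. compact K \<and> K \<subseteq> \<Omega> \<longrightarrow>
        (\<forall>M. \<exists>\<delta>>0. \<forall>t. 0 < t \<and> t < \<delta> \<longrightarrow> (\<forall>x\<in>K. u x t \<ge> M)))"

end

theory Submission
  imports Defs
begin


lemma time_max_deriv:
  fixes g :: "real \<Rightarrow> real"
  assumes "(g has_real_derivative d) (at t)" "\<rho> > 0"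
    "\<And>h. 0 < h \<Longrightarrow> h < \<rho> \<Longrightarrow> g (t - h) \<le> g t"
  shows "d \<ge> 0"
proof (rule ccontr)
  assume "\<not> d \<ge> 0"
  then have "d < 0" by simp
  from DERIV_neg_dec_left[OF assms(1) this] obtain e where e: "e > 0"
    "\<And>h. h > 0 \<Longrightarrow> h < e \<Longrightarrow> g t < g (t - h)" by blast
  define h where "h = min e \<rho> / 2"
  have "h > 0" "h < e" "h < \<rho>" using e assms(2) by (auto simp: h_def)
  then show False using e(2)[of h] assms(3)[of h] by auto
qed

lemma space_max_deriv2:
  fixes g g1 :: "real \<Rightarrow> real"
  assumes "\<rho> > 0" "\<And>h. \<bar>h\<bar> < \<rho> \<Longrightarrow> g h \<le> g 0"
    "\<And>h. \<bar>h\<bar> < \<rho> \<Longrightarrow> (g has_real_derivative g1 h) (at h)"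
    "(g1 has_real_derivative d2) (at 0)"
  shows "d2 \<le> 0"
proof (rule ccontr)
  assume "\<not> d2 \<le> 0"
  then have "d2 > 0" by simp
  have g10: "g1 0 = 0"
    by (rule DERIV_local_max[OF assms(3)[of 0] assms(1)]) (use assms in auto)
  from DERIV_pos_inc_right[OF assms(4) \<open>d2 > 0\<close>] obtain e where e: "e > 0"
    "\<And>h. h > 0 \<Longrightarrow> h < e \<Longrightarrow> g1 0 < g1 (0 + h)" by blast
  define h where "h = min e \<rho> / 2"
  have h: "h > 0" "h < e" "h < \<rho>" using e assms(1) by (auto simp: h_def)
  have "\<exists>z>0. z < h \<and> g h - g 0 = (h - 0) * g1 z"
    by (rule MVT2) (use h assms(3) in auto)
  then obtain z where z: "z > 0" "z < h" "g h - g 0 = h * g1 z" by auto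
  have "g1 z > 0" using e(2)[of z] z h g10 by auto
  then have "h * g1 z > 0" using h by simp
  then have "g h > g 0" using z by linarith
  then show False using assms(2)[of h] h by auto
qed

lemma powr_sum_ge:
  fixes a b q :: real
  assumes "a > 0" "b > 0" "q > 1"
  shows "(a + b) powr q \<ge> a powr q + b powr q"
proof -
  have ea: "a powr q = a * a powr (q - 1)" using assms by (simp add: powr_mult_base)
  have eb: "b powr q = b * b powr (q - 1)" using assms by (simp add: powr_mult_base)
  have eab: "(a+b) powr q = (a+b) * (a+b) powr (q - 1)" using assms by (simp add: powr_mult_base)
  have "a powr (q-1) \<le> (a+b) powr (q-1)" using assms by (intro powr_mono2) auto
  moreover have "b powr (q-1) \<le> (a+b) powr (q-1)" using assms by (intro powr_mono2) auto
  ultimately show ?thesis unfolding ea eb eab using assms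
    by (simp add: distrib_right add_mono mult_left_mono)
qed

lemma norm_axis_shift:
  fixes y :: "real ^ 'n::finite"
  shows "(norm (y + h *\<^sub>R axis i 1))\<^sup>2 = (norm y)\<^sup>2 + 2 * h * y $ i + h\<^sup>2"
  unfolding power2_norm_eq_inner
  by (simp add: inner_add_left inner_add_right inner_axis
      inner_commute[of "axis i 1"] inner_axis_axis power2_eq_square algebra_simps)

lemma norm_sq_sum:
  fixes y :: "real ^ 'n::finite"
  shows "(norm y)\<^sup>2 = (\<Sum>i\<in>UNIV. (y $ i)\<^sup>2)"
  unfolding power2_norm_eq_inner by (simp add: inner_vec_def power2_eq_square)



lemma comparison:
  fixes D :: "real ^ 'n::finite \<Rightarrow> real \<Rightarrow> real"
  assumes cont: "continuous_on (cball x0 r \<times> {a..b}) (\<lambda>p. D (fst p) (snd p))"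
    and bot: "\<And>x. x \<in> cball x0 r \<Longrightarrow> D x a \<le> 0"
    and lat: "\<And>x t. dist x0 x = r \<Longrightarrow> a \<le> t \<Longrightarrow> t \<le> b \<Longrightarrow> D x t \<le> 0"
    and int: "\<And>x t. x \<in> ball x0 r \<Longrightarrow> a < t \<Longrightarrow> t \<le> b \<Longrightarrow> D x t > 0 \<Longrightarrow>
               (\<forall>y\<in>cball x0 r. \<forall>s\<in>{a..b}. D y s \<le> D x t) \<Longrightarrow> False"
    and y: "y \<in> cball x0 r" and s: "s \<in> {a..b}"
  shows "D y s \<le> 0"
proof (rule ccontr)
  assume "\<not> D y s \<le> 0"
  hence pos: "D y s > 0" by simp
  have "compact (cball x0 r \<times> {a..b})" by (intro compact_Times) auto
  moreover have "cball x0 r \<times> {a..b} \<noteq> {}" using y s by blast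
  ultimately obtain p where p: "p \<in> cball x0 r \<times> {a..b}"
    "\<And>z. z \<in> cball x0 r \<times> {a..b} \<Longrightarrow> D (fst z) (snd z) \<le> D (fst p) (snd p)"
    using continuous_attains_sup[OF _ _ cont] by blast
  obtain x t where xt: "p = (x, t)" by (cases p)
  have mx: "\<forall>y\<in>cball x0 r. \<forall>s\<in>{a..b}. D y s \<le> D x t"
    using p(2) xt by fastforce
  have Dp: "D x t > 0" using mx y s pos by force
  have x: "x \<in> cball x0 r" and t: "a \<le> t" "t \<le> b" using p xt by auto
  have "dist x0 x \<noteq> r" using lat[of x t] t Dp by auto
  hence xb: "x \<in> ball x0 r" using x by auto
  have "t \<noteq> a" using bot[OF x] Dp by auto
  hence "a < t" using t by auto
  then show False using int[OF xb _ t(2) Dp mx] by blast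
qed

lemma u_dt:
  assumes "C21 \<Omega> u" "x \<in> \<Omega>" "t > 0"
  shows "((\<lambda>s. u x s) has_real_derivative dt u x t) (at t)"
  using assms unfolding C21_def dt_def
  by (simp add: DERIV_deriv_iff_real_differentiable)

lemma u_dx:
  assumes "C21 \<Omega> u" "x + h *\<^sub>R axis i 1 \<in> \<Omega>" "t > 0"
  shows "((\<lambda>h. u (x + h *\<^sub>R axis i 1) t) has_real_derivative dx i u (x + h *\<^sub>R axis i 1) t) (at h)"
proof -
  let ?y = "x + h *\<^sub>R axis i 1"
  have "((\<lambda>k. u (?y + k *\<^sub>R axis i 1) t) has_real_derivative dx i u ?y t) (at 0)"
    using assms unfolding C21_def dx_def
    by (simp add: DERIV_deriv_iff_real_differentiable)
  moreover have "(\<lambda>k. u (?y + k *\<^sub>R axis i 1) t) = (\<lambda>k. (\<lambda>h. u (x + h *\<^sub>R axis i 1) t) (k + h))"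
    by (simp add: scaleR_add_left algebra_simps)
  ultimately have "((\<lambda>k. (\<lambda>h. u (x + h *\<^sub>R axis i 1) t) (k + h)) has_real_derivative dx i u ?y t) (at 0)"
    by simp
  then show ?thesis using DERIV_shift[of "\<lambda>h. u (x + h *\<^sub>R axis i 1) t" "dx i u ?y t" 0 h] by simp
qed

lemma u_dxx:
  assumes "C21 \<Omega> u" "x \<in> \<Omega>" "t > 0"
  shows "((\<lambda>h. dx i u (x + h *\<^sub>R axis i 1) t) has_real_derivative dx i (dx i u) x t) (at 0)"
  using assms unfolding C21_def dx_def[of i "dx i u"]
  by (simp add: DERIV_deriv_iff_real_differentiable)



definition phi :: "real \<Rightarrow> real \<Rightarrow> real" where
  "phi q t = (1 / (q - 1)) powr (1 / (q - 1)) * t powr (- (1 / (q - 1)))"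

lemma phi_pos: "q > 1 \<Longrightarrow> t > 0 \<Longrightarrow> phi q t > 0"
  by (simp add: phi_def)

lemma phi_pow: assumes "q > 1" "t > 0" shows "phi q t powr (q - 1) = (1 / (q - 1)) / t"
proof -
  have "phi q t powr (q - 1) = ((1 / (q - 1)) powr (1 / (q - 1))) powr (q - 1) * (t powr (- (1 / (q - 1)))) powr (q - 1)"
    unfolding phi_def using assms by (simp add: powr_mult)
  also have "\<dots> = (1 / (q - 1)) * t powr (-1)"
    using assms by (simp add: powr_powr)
  finally show ?thesis using assms by (simp add: powr_minus divide_simps)
qed

lemma phi_powq: assumes "q > 1" "t > 0" shows "phi q t powr q = phi q t * ((1 / (q - 1)) / t)"
proof -
  have "phi q t powr q = phi q t * phi q t powr (q - 1)"
    using phi_pos[OF assms] by (simp add: powr_mult_base)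
  then show ?thesis using phi_pow[OF assms] by simp
qed

lemma phi_deriv: assumes "q > 1" "t > 0"
  shows "((\<lambda>s. phi q s) has_real_derivative (- (phi q t powr q))) (at t)"
proof -
  let ?c = "(1 / (q - 1)) powr (1 / (q - 1))" and ?b = "1 / (q - 1)"
  have "((\<lambda>s. ?c * s powr (- ?b)) has_real_derivative ?c * ((- ?b) * t powr (- ?b - 1))) (at t)"
    by (intro DERIV_cmult has_real_derivative_powr) (use assms in auto)
  moreover have "?c * ((- ?b) * t powr (- ?b - 1)) = - (phi q t powr q)"
  proof -
    have "t powr (- ?b - 1) = t powr (- ?b) / t" using assms by (simp add: powr_diff)
    then show ?thesis unfolding phi_powq[OF assms] by (simp add: phi_def field_simps)
  qed
  ultimately show ?thesis unfolding phi_def by simp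
qed

lemma phi_mono: assumes "q > 1" "0 < s" "s \<le> t" shows "phi q t \<le> phi q s"
  unfolding phi_def using assms by (intro mult_left_mono) (auto intro!: powr_mono2')

lemma phi_scale: assumes "q > 1" "t > 0"
  shows "t powr (1 / (q - 1)) * phi q t = (1 / (q - 1)) powr (1 / (q - 1))"
  unfolding phi_def using assms by (simp add: powr_minus field_simps)

lemma phi_cont: "q > 1 \<Longrightarrow> continuous_on {0<..} (phi q)"
  unfolding phi_def by (intro continuous_intros) auto



lemma V_axis1:
  fixes R S a lam al :: real
  assumes "R\<^sup>2 - (S + 2*h*a + h\<^sup>2) > 0"
  shows "((\<lambda>h. lam * (R\<^sup>2 - (S + 2*h*a + h\<^sup>2)) powr (- al)) has_real_derivative
     lam * al * (2*a + 2*h) * (R\<^sup>2 - (S + 2*h*a + h\<^sup>2)) powr (- al - 1)) (at h)"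
  using assms
  by (auto intro!: derivative_eq_intros simp: algebra_simps)

lemma V_axis2:
  fixes R S a lam al :: real
  assumes "R\<^sup>2 - S > 0"
  shows "((\<lambda>h. lam * al * (2*a + 2*h) * (R\<^sup>2 - (S + 2*h*a + h\<^sup>2)) powr (- al - 1)) has_real_derivative
     lam * al * (2 * (R\<^sup>2 - S) powr (- al - 1) + 4 * (al + 1) * a\<^sup>2 * (R\<^sup>2 - S) powr (- al - 2))) (at 0)"
proof -
  have e: "- al - 1 - 1 = - al - 2" by simp
  show ?thesis
  using assms
  apply (auto intro!: derivative_eq_intros simp: e)
  apply (simp add: algebra_simps power2_eq_square)
  done
qed



lemma small_powr:
  fixes a c E M :: real
  assumes "a > 0" "c > 0" "E > 0"
  shows "\<exists>e. 0 < e \<and> e < E \<and> c * e powr (- a) > M"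
proof -
  define m where "m = c / (\<bar>M\<bar> + 1)"
  have m: "m > 0" using assms by (simp add: m_def)
  define e where "e = min (E/2) (m powr (1/a))"
  have e: "e > 0" "e < E" using assms m by (auto simp: e_def)
  have "e powr a \<le> (m powr (1/a)) powr a"
    using e assms by (intro powr_mono2) (auto simp: e_def)
  also have "\<dots> = m" using assms m by (simp add: powr_powr)
  finally have ea: "e powr a \<le> m" .
  have "e powr a > 0" using e by simp
  have "c * e powr (- a) = c / e powr a" by (simp add: powr_minus divide_inverse)
  also have "\<dots> \<ge> c / m" using ea \<open>e powr a > 0\<close> assms m by (intro divide_left_mono) auto
  also have "c / m = \<bar>M\<bar> + 1" using assms by (simp add: m_def)
  finally show ?thesis using e by (intro exI[of _ e]) auto
qed

lemma V_sup_ineq: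
  fixes lam al q R p S N C :: real
  assumes q: "q > 1" and al: "al = 2 / (q - 1)" and C: "C = 4*al*(al+1) + 2*N*al"
    and N: "N \<ge> 0" and lam: "lam = (C * R\<^sup>2) powr (1 / (q - 1))"
    and R: "R > 0" and p: "p > 0" "p = R\<^sup>2 - S" and S: "S \<ge> 0"
  shows "lam * al * (2 * N * p powr (- al - 1) + 4 * (al + 1) * S * p powr (- al - 2))
     \<le> (lam * p powr (- al)) powr q"
proof -
  have alpos: "al > 0" using q al by simp
  have Cpos: "C > 0" using C alpos N by (simp add: add_pos_nonneg)
  have lampos: "lam > 0" using lam Cpos R by simp
  have lq: "lam powr q = lam * (C * R\<^sup>2)"
  proof -
    have "lam powr q = lam * lam powr (q - 1)" using lampos by (simp add: powr_mult_base)
    also have "lam powr (q - 1) = C * R\<^sup>2" using lam q Cpos R by (simp add: powr_powr)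
    finally show ?thesis .
  qed
  have pq: "(p powr (- al)) powr q = p powr (- al - 2)"
  proof -
    have "- al * q = - al - 2" using q al by (simp add: field_simps)
    then show ?thesis using p by (simp add: powr_powr)
  qed
  have rhs: "(lam * p powr (- al)) powr q = lam * (C * R\<^sup>2) * p powr (- al - 2)"
  proof -
    have "(lam * p powr (- al)) powr q = lam powr q * (p powr (-al)) powr q"
      using lampos p(1) by (simp add: powr_mult)
    then show ?thesis unfolding lq pq .
  qed
  have p1: "p powr (- al - 1) = p * p powr (- al - 2)"
  proof -
    have "- al - 1 = 1 + (- al - 2)" by simp
    then have "p powr (- al - 1) = p powr (1 + (- al - 2))" by (rule arg_cong)
    also have "\<dots> = p * p powr (- al - 2)" using p(1) by (simp only: powr_add powr_one)
    finally show ?thesis .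
  qed
  have pp: "p powr (- al - 2) > 0" using p by simp
  have "al * (2 * N * p + 4 * (al + 1) * S) \<le> C * R\<^sup>2"
  proof -
    have "p \<le> R\<^sup>2" "S \<le> R\<^sup>2" using p S by auto
    then have "2 * N * p \<le> 2 * N * R\<^sup>2" "4 * (al + 1) * S \<le> 4 * (al + 1) * R\<^sup>2"
      using N alpos by (auto intro: mult_left_mono)
    then have "al * (2 * N * p + 4 * (al + 1) * S) \<le> al * (2 * N * R\<^sup>2 + 4 * (al + 1) * R\<^sup>2)"
      using alpos by (intro mult_left_mono) (auto intro: add_mono)
    then show ?thesis using C by (simp add: algebra_simps)
  qed
  then have "lam * (al * (2 * N * p + 4 * (al + 1) * S)) * p powr (- al - 2) \<le> lam * (C * R\<^sup>2) * p powr (- al - 2)"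
    using lampos pp by (intro mult_right_mono mult_left_mono) auto
  then show ?thesis unfolding rhs p1 by (simp add: algebra_simps)
qed



lemma axis_shift_sq:
  fixes x x0 :: "real ^ 'n::finite"
  shows "(norm (x + h *\<^sub>R axis i 1 - x0))\<^sup>2 = (norm (x - x0))\<^sup>2 + 2 * h * (x - x0) $ i + h\<^sup>2"
proof -
  have "x + h *\<^sub>R axis i 1 - x0 = (x - x0) + h *\<^sub>R axis i 1" by (simp add: algebra_simps)
  then show ?thesis using norm_axis_shift[of "x - x0" h i] by metis
qed

lemma axis_in_ball:
  fixes x x0 :: "real ^ 'n::finite"
  assumes "x \<in> ball x0 r" "\<bar>h\<bar> < r - dist x0 x"
  shows "x + h *\<^sub>R axis i 1 \<in> ball x0 r"
proof -
  have "dist x0 (x + h *\<^sub>R axis i 1) \<le> dist x0 x + dist x (x + h *\<^sub>R axis i 1)"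
    by (rule dist_triangle)
  also have "dist x (x + h *\<^sub>R axis i 1) = norm (h *\<^sub>R (axis i 1 :: real ^ 'n))" by (simp add: dist_norm)
  also have "norm (h *\<^sub>R (axis i 1 :: real ^ 'n)) = \<bar>h\<bar>" by simp
  finally show ?thesis using assms by (simp add: dist_commute)
qed

lemma C21_cont:
  assumes "C21 \<Omega> u" "S \<subseteq> \<Omega> \<times> {0<..}"
  shows "continuous_on S (\<lambda>p. u (fst p) (snd p))"
proof -
  have "continuous_on (\<Omega> \<times> {0<..}) (\<lambda>(x,t). u x t)" using assms unfolding C21_def by blast
  then have "continuous_on S (\<lambda>(x,t). u x t)" using assms(2) continuous_on_subset by blast
  then show ?thesis by (simp add: case_prod_beta)
qed



lemma upper_tau:
  fixes u :: "real ^ 'n::finite \<Rightarrow> real \<Rightarrow> real"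
  assumes q: "q > 1" and sol: "C21 \<Omega> u" and upos: "\<forall>x\<in>\<Omega>. \<forall>t>0. u x t > 0"
    and eq: "\<forall>x\<in>\<Omega>. \<forall>t>0. dt u x t - laplacian u x t + u x t powr q = 0"
    and R: "R > 0" and sub: "cball x0 R \<subseteq> \<Omega>" and tau: "0 < \<tau>" "\<tau> < t0"
    and al: "al = 2 / (q - 1)" and C: "C = 4*al*(al+1) + 2*real CARD('n)*al"
    and lam: "lam = (C * R\<^sup>2) powr (1 / (q - 1))"
  shows "u x0 t0 \<le> phi q (t0 - \<tau>) + lam * (R\<^sup>2) powr (- al)"
proof -
  define N where "N = real CARD('n)"
  have alpos: "al > 0" using q al by simp
  have Cpos: "C > 0" using C alpos by (simp add: add_pos_nonneg)
  have lampos: "lam > 0" using lam Cpos R by simp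
  have t0: "t0 > 0" using tau by simp
  have cpt: "compact (cball x0 R \<times> {\<tau>..t0})" by (intro compact_Times) auto
  have ne: "cball x0 R \<times> {\<tau>..t0} \<noteq> {}" using R tau by auto
  have subK: "cball x0 R \<times> {\<tau>..t0} \<subseteq> \<Omega> \<times> {0<..}" using sub tau by auto
  obtain pm where pm: "pm \<in> cball x0 R \<times> {\<tau>..t0}"
    "\<And>z. z \<in> cball x0 R \<times> {\<tau>..t0} \<Longrightarrow> u (fst z) (snd z) \<le> u (fst pm) (snd pm)"
    using continuous_attains_sup[OF cpt ne C21_cont[OF sol subK]] by blast
  define Mu where "Mu = u (fst pm) (snd pm)"
  have Mu: "\<And>y s. y \<in> cball x0 R \<Longrightarrow> \<tau> \<le> s \<Longrightarrow> s \<le> t0 \<Longrightarrow> u y s \<le> Mu"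
    using pm(2) unfolding Mu_def by force
  obtain \<epsilon> where eps: "0 < \<epsilon>" "\<epsilon> < R\<^sup>2" "lam * \<epsilon> powr (- al) > Mu"
    using small_powr[OF alpos lampos, of "R\<^sup>2" Mu] R by auto
  obtain \<delta> where del: "0 < \<delta>" "\<delta> < t0 - \<tau>" "phi q \<delta> > Mu"
    using small_powr[of "1/(q-1)" "(1 / (q - 1)) powr (1 / (q - 1))" "t0 - \<tau>" Mu] q tau
    unfolding phi_def by auto
  define r where "r = sqrt (R\<^sup>2 - \<epsilon>)"
  have r2: "r\<^sup>2 = R\<^sup>2 - \<epsilon>" using eps by (simp add: r_def)
  have rpos: "r > 0" using eps by (simp add: r_def)
  have rR: "r < R" using r2 eps R by (intro power_less_imp_less_base[of r 2 R]) auto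
  have cb: "cball x0 r \<subseteq> cball x0 R" using rR by auto
  define D where "D x t = u x t - (phi q (t - \<tau>) + lam * (R\<^sup>2 - (norm (x - x0))\<^sup>2) powr (- al))" for x t
  have Ppos: "R\<^sup>2 - (norm (x - x0))\<^sup>2 \<ge> \<epsilon>" if "x \<in> cball x0 r" for x
  proof -
    have "norm (x - x0) \<le> r" using that by (simp add: dist_norm norm_minus_commute)
    then have "(norm (x - x0))\<^sup>2 \<le> r\<^sup>2" by (intro power_mono) auto
    then show ?thesis using r2 by simp
  qed
  have "D x0 t0 \<le> 0"
  proof (rule comparison[of x0 r "\<tau> + \<delta>" t0 D])
    show "continuous_on (cball x0 r \<times> {\<tau> + \<delta>..t0}) (\<lambda>p. D (fst p) (snd p))"
    proof -
      have S1: "cball x0 r \<times> {\<tau> + \<delta>..t0} \<subseteq> \<Omega> \<times> {0<..}" using cb sub tau del by auto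
      have c1: "continuous_on (cball x0 r \<times> {\<tau> + \<delta>..t0}) (\<lambda>p. u (fst p) (snd p))"
        by (rule C21_cont[OF sol S1])
      have c2: "continuous_on (cball x0 r \<times> {\<tau> + \<delta>..t0}) (\<lambda>p. phi q (snd p - \<tau>))"
        unfolding phi_def using del by (intro continuous_intros) auto
      have c3: "continuous_on (cball x0 r \<times> {\<tau> + \<delta>..t0}) (\<lambda>p. lam * (R\<^sup>2 - (norm (fst p - x0))\<^sup>2) powr (- al))"
        using Ppos eps by (intro continuous_intros) (auto, fastforce)
      show ?thesis unfolding D_def by (intro continuous_intros c1 c2 c3)
    qed
  next
    fix x assume x: "x \<in> cball x0 r"
    have "u x (\<tau> + \<delta>) \<le> Mu" using Mu[of x "\<tau>+\<delta>"] x cb del by auto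
    moreover have "lam * (R\<^sup>2 - (norm (x - x0))\<^sup>2) powr (- al) > 0" using lampos Ppos[OF x] eps by simp
    ultimately show "D x (\<tau> + \<delta>) \<le> 0" unfolding D_def using del by simp
  next
    fix x t assume x: "dist x0 x = r" and t: "\<tau> + \<delta> \<le> t" "t \<le> t0"
    have "norm (x - x0) = r" using x by (simp add: dist_norm norm_minus_commute)
    then have "R\<^sup>2 - (norm (x - x0))\<^sup>2 = \<epsilon>" using r2 by simp
    moreover have "u x t \<le> Mu" using Mu[of x t] x cb t del by auto
    moreover have "phi q (t - \<tau>) > 0" using phi_pos[OF q] t del by simp
    ultimately show "D x t \<le> 0" unfolding D_def using eps by simp
  next
    show "x0 \<in> cball x0 r" using rpos by simp
    show "t0 \<in> {\<tau> + \<delta>..t0}" using del by simp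
  next
    fix x t assume xb: "x \<in> ball x0 r" and t: "\<tau> + \<delta> < t" "t \<le> t0" and Dp: "D x t > 0"
      and mx: "\<forall>y\<in>cball x0 r. \<forall>s\<in>{\<tau> + \<delta>..t0}. D y s \<le> D x t"
    have xc: "x \<in> cball x0 r" using xb by auto
    have xO: "x \<in> \<Omega>" using xc cb sub by auto
    have tpos: "t > 0" using t tau del by simp
    define S where "S = (norm (x - x0))\<^sup>2"
    define P0 where "P0 = R\<^sup>2 - S"
    have P0: "P0 > 0" using Ppos[OF xc] eps unfolding P0_def S_def by simp
    have S0: "S \<ge> 0" unfolding S_def by simp
    have dphi: "((\<lambda>s. phi q (s - \<tau>)) has_real_derivative - (phi q (t - \<tau>) powr q)) (at t)"
      using phi_deriv[OF q, of "t - \<tau>"] DERIV_shift[of "phi q" _ t "-\<tau>"] t del tau by simp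
    have dg: "((\<lambda>s. D x s) has_real_derivative
        dt u x t - (- (phi q (t - \<tau>) powr q) + 0)) (at t)"
      unfolding D_def by (intro DERIV_diff DERIV_add u_dt[OF sol xO tpos] dphi DERIV_const)
    have T: "dt u x t - (- (phi q (t - \<tau>) powr q) + 0) \<ge> 0"
    proof (rule time_max_deriv[OF dg, of "t - (\<tau> + \<delta>)"])
      show "0 < t - (\<tau> + \<delta>)" using t by simp
      fix h assume "0 < h" "h < t - (\<tau> + \<delta>)"
      then show "D x (t - h) \<le> D x t" using mx xc t by auto
    qed
    define A where "A = lam * al * 2 * P0 powr (- al - 1)"
    define B where "B = lam * al * 4 * (al + 1) * P0 powr (- al - 2)"
    have Sp: "dx i (dx i u) x t \<le> A + B * ((x - x0) $ i)\<^sup>2" for i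
    proof -
      define a where "a = (x - x0) $ i"
      define \<rho> where "\<rho> = r - dist x0 x"
      have rho: "\<rho> > 0" using xb by (simp add: \<rho>_def)
      have inb: "x + h *\<^sub>R axis i 1 \<in> ball x0 r" if "\<bar>h\<bar> < \<rho>" for h
        using axis_in_ball[OF xb] that by (simp add: \<rho>_def)
      have nsq: "(norm (x + h *\<^sub>R axis i 1 - x0))\<^sup>2 = S + 2 * h * a + h\<^sup>2" for h
        unfolding S_def a_def by (rule axis_shift_sq)
      have Ph: "R\<^sup>2 - (S + 2 * h * a + h\<^sup>2) > 0" if "\<bar>h\<bar> < \<rho>" for h
        using Ppos[of "x + h *\<^sub>R axis i 1"] inb[OF that] eps nsq[of h] by auto
      have geq: "(\<lambda>h. D (x + h *\<^sub>R axis i 1) t) = (\<lambda>h. u (x + h *\<^sub>R axis i 1) t -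
          (phi q (t - \<tau>) + lam * (R\<^sup>2 - (S + 2 * h * a + h\<^sup>2)) powr (- al)))"
        unfolding D_def nsq by simp
      have "dx i (dx i u) x t - (0 + lam * al * (2 * (R\<^sup>2 - S) powr (- al - 1) + 4 * (al + 1) * a\<^sup>2 * (R\<^sup>2 - S) powr (- al - 2))) \<le> 0"
      proof (rule space_max_deriv2[OF rho])
        fix h :: real assume h: "\<bar>h\<bar> < \<rho>"
        show "D (x + h *\<^sub>R axis i 1) t \<le> D (x + 0 *\<^sub>R axis i 1) t"
          using mx inb[OF h] t by auto
        have xh: "x + h *\<^sub>R axis i 1 \<in> \<Omega>" using inb[OF h] cb sub by (meson ball_subset_cball subsetD)
        show "((\<lambda>h. D (x + h *\<^sub>R axis i 1) t) has_real_derivative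
           (dx i u (x + h *\<^sub>R axis i 1) t - (0 + lam * al * (2*a + 2*h) * (R\<^sup>2 - (S + 2*h*a + h\<^sup>2)) powr (- al - 1)))) (at h)"
          unfolding geq
          by (intro DERIV_diff DERIV_add u_dx[OF sol xh tpos] DERIV_const V_axis1 Ph h)
      next
        have "R\<^sup>2 - S > 0" using P0 unfolding P0_def .
        then show "((\<lambda>h. dx i u (x + h *\<^sub>R axis i 1) t - (0 + lam * al * (2*a + 2*h) * (R\<^sup>2 - (S + 2*h*a + h\<^sup>2)) powr (- al - 1)))
          has_real_derivative dx i (dx i u) x t - (0 + lam * al * (2 * (R\<^sup>2 - S) powr (- al - 1) + 4 * (al + 1) * a\<^sup>2 * (R\<^sup>2 - S) powr (- al - 2)))) (at 0)"
          by (intro DERIV_diff DERIV_add u_dxx[OF sol xO tpos] DERIV_const V_axis2)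
      qed
      then show ?thesis unfolding A_def B_def a_def P0_def by (simp add: algebra_simps)
    qed
    have lap: "laplacian u x t \<le> N * A + B * S"
    proof -
      have "laplacian u x t \<le> (\<Sum>i\<in>UNIV. A + B * ((x - x0) $ i)\<^sup>2)"
        unfolding laplacian_def by (intro sum_mono Sp)
      also have "\<dots> = N * A + B * S"
        unfolding S_def norm_sq_sum N_def by (simp add: sum.distrib sum_distrib_left)
      finally show ?thesis .
    qed
    have Vq: "N * A + B * S \<le> (lam * P0 powr (- al)) powr q"
    proof -
      have "lam * al * (2 * N * P0 powr (- al - 1) + 4 * (al + 1) * S * P0 powr (- al - 2))
         \<le> (lam * P0 powr (- al)) powr q"
        by (rule V_sup_ineq[OF q al _ _ lam R P0]) (use C S0 P0_def N_def in auto)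
      then show ?thesis unfolding A_def B_def by (simp add: algebra_simps)
    qed
    define Ph where "Ph = phi q (t - \<tau>)"
    define V where "V = lam * P0 powr (- al)"
    have Php: "Ph > 0" using phi_pos[OF q] t del unfolding Ph_def by simp
    have Vp: "V > 0" using lampos P0 unfolding V_def by simp
    have uW: "u x t > Ph + V" using Dp unfolding D_def Ph_def V_def P0_def S_def by simp
    have e1: "dt u x t - laplacian u x t + u x t powr q = 0" using eq xO tpos by blast
    have "(Ph + V) powr q < u x t powr q"
      using uW Php Vp q by (intro powr_less_mono2) auto
    moreover have "Ph powr q + V powr q \<le> (Ph + V) powr q" by (rule powr_sum_ge[OF Php Vp q])
    moreover have "V powr q \<ge> laplacian u x t" using lap Vq unfolding V_def by simp
    ultimately show False using T e1 unfolding Ph_def by simp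
  qed
  then show ?thesis unfolding D_def by simp
qed



lemma upper:
  fixes u :: "real ^ 'n::finite \<Rightarrow> real \<Rightarrow> real"
  assumes q: "q > 1" and sol: "C21 \<Omega> u" and upos: "\<forall>x\<in>\<Omega>. \<forall>t>0. u x t > 0"
    and eq: "\<forall>x\<in>\<Omega>. \<forall>t>0. dt u x t - laplacian u x t + u x t powr q = 0"
    and R: "R > 0" and sub: "cball x0 R \<subseteq> \<Omega>" and t0: "0 < t0"
    and al: "al = 2 / (q - 1)" and C: "C = 4*al*(al+1) + 2*real CARD('n)*al"
    and lam: "lam = (C * R\<^sup>2) powr (1 / (q - 1))"
  shows "u x0 t0 \<le> phi q t0 + lam * (R\<^sup>2) powr (- al)"
proof -
  let ?K = "lam * (R\<^sup>2) powr (- al)"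
  have "isCont (phi q) t0"
    using phi_cont[OF q] t0 continuous_on_eq_continuous_at[of "{0<..}" "phi q"] by auto
  moreover have "((\<lambda>\<tau>. t0 - \<tau>) \<longlongrightarrow> t0) (at_right 0)"
    by (auto intro!: tendsto_eq_intros)
  ultimately have "((\<lambda>\<tau>. phi q (t0 - \<tau>)) \<longlongrightarrow> phi q t0) (at_right 0)"
    by (rule isCont_tendsto_compose)
  then have lim: "((\<lambda>\<tau>. phi q (t0 - \<tau>) + ?K) \<longlongrightarrow> phi q t0 + ?K) (at_right 0)"
    by (intro tendsto_intros)
  have ev: "eventually (\<lambda>\<tau>. u x0 t0 \<le> phi q (t0 - \<tau>) + ?K) (at_right 0)"
    unfolding eventually_at_right_field
    using upper_tau[OF q sol upos eq R sub _ _ al C lam] t0 by (intro exI[of _ t0]) auto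
  show ?thesis
    by (rule tendsto_le[OF trivial_limit_at_right_real lim tendsto_const ev])
qed

lemma Z_axis1:
  fixes c S a K :: real
  shows "((\<lambda>h. K * (1 - c * (S + 2*h*a + h\<^sup>2))\<^sup>2) has_real_derivative
     K * (2 * (1 - c * (S + 2*h*a + h\<^sup>2)) * (- (c * (2*a + 2*h))))) (at h)"
  by (auto intro!: derivative_eq_intros simp: algebra_simps)

lemma Z_axis2:
  fixes c S a K :: real
  shows "((\<lambda>h. K * (2 * (1 - c * (S + 2*h*a + h\<^sup>2)) * (- (c * (2*a + 2*h))))) has_real_derivative
     K * (8 * c\<^sup>2 * a\<^sup>2 - 4 * c * (1 - c * S))) (at 0)"
  by (auto intro!: derivative_eq_intros simp: algebra_simps power2_eq_square)

lemma sub_ineq: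
  fixes q \<theta> P \<sigma> w N R T0 S :: real
  assumes q: "q > 1" and th: "0 < \<theta>" "\<theta> < 1" and P: "P > 0" and sg: "\<sigma> > 0"
    and Pq: "P powr q = P * ((1 / (q - 1)) / \<sigma>)" and w: "0 < w" "w \<le> 1"
    and S: "S = R\<^sup>2 * (1 - w)" and N: "N \<ge> 0" and R: "R > 0"
    and T0: "T0 = 4 * R\<^sup>2 * (1 / (q - 1)) * (1 - \<theta> powr (q - 1)) / (4 * N + 8)\<^sup>2"
    and sT: "\<sigma> \<le> 2 * T0"
  shows "(\<theta> * P * w\<^sup>2) powr q \<le> \<theta> * P powr q * w\<^sup>2 + \<theta> * P * (8 * S / R^4 - 4 * N * w / R\<^sup>2)"
proof -
  define \<beta> where "\<beta> = 1 / (q - 1)"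
  define \<Theta> where "\<Theta> = \<theta> powr (q - 1)"
  define A where "A = 4 * N + 8"
  have bp: "\<beta> > 0" using q by (simp add: \<beta>_def)
  have Th: "0 < \<Theta>" "\<Theta> < 1" using th q powr_less_mono2[of "q - 1" \<theta> 1] unfolding \<Theta>_def by auto
  have Ap: "A \<ge> 8" using N by (simp add: A_def)
  have eta: "0 < w\<^sup>2" "w\<^sup>2 \<le> 1" using w by (auto simp: power_le_one)
  have z: "\<theta> * P * w\<^sup>2 > 0" using th P eta by simp
  have "(\<theta> * P * w\<^sup>2) powr q = (\<theta> * P * w\<^sup>2) * (\<theta> * P * w\<^sup>2) powr (q - 1)"
    using z by (simp add: powr_mult_base)
  also have "(\<theta> * P * w\<^sup>2) powr (q - 1) = \<Theta> * P powr (q - 1) * (w\<^sup>2) powr (q - 1)"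
    using th P eta unfolding \<Theta>_def by (simp add: powr_mult)
  also have "P powr (q - 1) = \<beta> / \<sigma>"
  proof -
    have "P powr q = P * P powr (q - 1)" using P by (simp add: powr_mult_base)
    then have "P * P powr (q - 1) = P * (\<beta> / \<sigma>)" using Pq unfolding \<beta>_def by simp
    then show ?thesis using P by (metis mult_cancel_left less_irrefl)
  qed
  finally have e1: "(\<theta> * P * w\<^sup>2) powr q = \<theta> * P * w\<^sup>2 * (\<Theta> * (\<beta> / \<sigma>) * (w\<^sup>2) powr (q - 1))" .
  have "(w\<^sup>2) powr (q - 1) \<le> 1" using powr_mono2[of "q - 1" "w\<^sup>2" 1] eta q by simp
  then have "\<Theta> * (\<beta> / \<sigma>) * (w\<^sup>2) powr (q - 1) \<le> \<Theta> * (\<beta> / \<sigma>)"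
    using Th bp sg mult_left_mono[of "(w\<^sup>2) powr (q - 1)" 1 "\<Theta> * (\<beta> / \<sigma>)"] by simp
  then have "\<theta> * P * w\<^sup>2 * (\<Theta> * (\<beta> / \<sigma>) * (w\<^sup>2) powr (q - 1)) \<le> \<theta> * P * w\<^sup>2 * (\<Theta> * (\<beta> / \<sigma>))"
    using z by (intro mult_left_mono) auto
  then have e2: "(\<theta> * P * w\<^sup>2) powr q \<le> \<theta> * P * (w\<^sup>2 * \<Theta> * (\<beta> / \<sigma>))"
    unfolding e1 by (simp add: algebra_simps)
  have T0e: "T0 = 4 * R\<^sup>2 * \<beta> * (1 - \<Theta>) / A\<^sup>2" using T0 unfolding \<beta>_def \<Theta>_def A_def .
  have T0p: "T0 > 0" using T0e R bp Th Ap by simp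
  have k1: "(1 - \<Theta>) * \<beta> / \<sigma> \<ge> A\<^sup>2 / (8 * R\<^sup>2)"
  proof -
    have "(1 - \<Theta>) * \<beta> / \<sigma> \<ge> (1 - \<Theta>) * \<beta> / (2 * T0)"
      using sg sT Th bp T0p by (intro divide_left_mono) auto
    also have "(1 - \<Theta>) * \<beta> / (2 * T0) = A\<^sup>2 / (8 * R\<^sup>2)"
      unfolding T0e using R bp Th Ap by (simp add: field_simps power2_eq_square)
    finally show ?thesis .
  qed
  have k2: "A * w - 8 \<le> A\<^sup>2 / 8 * w\<^sup>2"
  proof (cases "A * w \<le> 8")
    case True then show ?thesis using w Ap by (smt (verit) zero_le_power2 mult_nonneg_nonneg divide_nonneg_nonneg)
  next
    case False
    then have "A * w * (A * w / 8) \<ge> A * w" using w Ap mult_left_mono[of 1 "A * w / 8" "A * w"] by simp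
    then show ?thesis by (simp add: power2_eq_square algebra_simps)
  qed
  have k3: "(A * w - 8) / R\<^sup>2 \<le> w\<^sup>2 * ((1 - \<Theta>) * \<beta> / \<sigma>)"
  proof -
    have "(A * w - 8) / R\<^sup>2 \<le> (A\<^sup>2 / 8 * w\<^sup>2) / R\<^sup>2" using k2 R by (intro divide_right_mono) auto
    also have "\<dots> = w\<^sup>2 * (A\<^sup>2 / (8 * R\<^sup>2))" by (simp add: field_simps)
    also have "\<dots> \<le> w\<^sup>2 * ((1 - \<Theta>) * \<beta> / \<sigma>)" using k1 by (intro mult_left_mono) auto
    finally show ?thesis .
  qed
  have k4: "w\<^sup>2 * \<Theta> * (\<beta> / \<sigma>) \<le> (\<beta> / \<sigma>) * w\<^sup>2 + (8 * S / R^4 - 4 * N * w / R\<^sup>2)"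
  proof -
    have "8 * S / R^4 - 4 * N * w / R\<^sup>2 = - ((A * w - 8) / R\<^sup>2)"
      unfolding S A_def using R by (simp add: field_simps power2_eq_square power4_eq_xxxx)
    moreover have "w\<^sup>2 * \<Theta> * (\<beta> / \<sigma>) = (\<beta> / \<sigma>) * w\<^sup>2 - w\<^sup>2 * ((1 - \<Theta>) * \<beta> / \<sigma>)"
      using sg by (simp add: field_simps)
    ultimately show ?thesis using k3 by (smt (verit))
  qed
  have "\<theta> * P * (w\<^sup>2 * \<Theta> * (\<beta> / \<sigma>)) \<le> \<theta> * P * ((\<beta> / \<sigma>) * w\<^sup>2 + (8 * S / R^4 - 4 * N * w / R\<^sup>2))"
    using k4 th P by (intro mult_left_mono) auto
  also have "\<dots> = \<theta> * P powr q * w\<^sup>2 + \<theta> * P * (8 * S / R^4 - 4 * N * w / R\<^sup>2)"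
    unfolding Pq \<beta>_def by (simp add: algebra_simps)
  finally show ?thesis using e2 by simp
qed



lemma lower_s:
  fixes u :: "real ^ 'n::finite \<Rightarrow> real \<Rightarrow> real"
  assumes q: "q > 1" and sol: "C21 \<Omega> u" and upos: "\<forall>x\<in>\<Omega>. \<forall>t>0. u x t > 0"
    and eq: "\<forall>x\<in>\<Omega>. \<forall>t>0. dt u x t - laplacian u x t + u x t powr q = 0"
    and R: "R > 0" and sub: "cball x0 R \<subseteq> \<Omega>"
    and blow: "\<forall>M. \<exists>\<delta>>0. \<forall>t. 0 < t \<and> t < \<delta> \<longrightarrow> (\<forall>x\<in>cball x0 R. M \<le> u x t)"
    and th: "0 < \<theta>" "\<theta> < 1"
    and T0: "T0 = 4 * R\<^sup>2 * (1 / (q - 1)) * (1 - \<theta> powr (q - 1)) / (4 * real CARD('n) + 8)\<^sup>2"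
    and t0: "0 < t0" "t0 < T0" and s: "0 < s" "s < T0"
  shows "\<theta> * phi q (t0 + s) \<le> u x0 t0"
proof -
  define N where "N = real CARD('n)"
  obtain \<delta> where del: "\<delta> > 0" "\<And>t x. 0 < t \<Longrightarrow> t < \<delta> \<Longrightarrow> x \<in> cball x0 R \<Longrightarrow> phi q s \<le> u x t"
    using blow by blast
  define \<tau> where "\<tau> = min \<delta> t0 / 2"
  have tau: "0 < \<tau>" "\<tau> < \<delta>" "\<tau> < t0" using del t0 by (auto simp: \<tau>_def)
  define c where "c = 1 / R\<^sup>2"
  have cpos: "c > 0" using R by (simp add: c_def)
  define D where "D x t = \<theta> * phi q (t + (s - \<tau>)) * (1 - c * (norm (x - x0))\<^sup>2)\<^sup>2 - u x t" for x t
  have wb: "0 \<le> 1 - c * (norm (x - x0))\<^sup>2" "1 - c * (norm (x - x0))\<^sup>2 \<le> 1" if "x \<in> cball x0 R" for x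
  proof -
    have "norm (x - x0) \<le> R" using that by (simp add: dist_norm norm_minus_commute)
    then have "(norm (x - x0))\<^sup>2 \<le> R\<^sup>2" by (intro power_mono) auto
    then have "c * (norm (x - x0))\<^sup>2 \<le> 1" using R by (simp add: c_def field_simps)
    then show "0 \<le> 1 - c * (norm (x - x0))\<^sup>2" by simp
    show "1 - c * (norm (x - x0))\<^sup>2 \<le> 1" using cpos by simp
  qed
  have "D x0 t0 \<le> 0"
  proof (rule comparison[of x0 R \<tau> t0 D])
    show "continuous_on (cball x0 R \<times> {\<tau>..t0}) (\<lambda>p. D (fst p) (snd p))"
    proof -
      have S1: "cball x0 R \<times> {\<tau>..t0} \<subseteq> \<Omega> \<times> {0<..}" using sub tau by auto
      have c1: "continuous_on (cball x0 R \<times> {\<tau>..t0}) (\<lambda>p. u (fst p) (snd p))"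
        by (rule C21_cont[OF sol S1])
      have c2: "continuous_on (cball x0 R \<times> {\<tau>..t0}) (\<lambda>p. phi q (snd p + (s - \<tau>)))"
        unfolding phi_def using s tau by (intro continuous_intros) auto
      show ?thesis unfolding D_def by (intro continuous_intros c1 c2)
    qed
  next
    fix x assume x: "x \<in> cball x0 R"
    have "(1 - c * (norm (x - x0))\<^sup>2)\<^sup>2 \<le> 1" using wb[OF x] by (simp add: power_le_one)
    moreover have "phi q s > 0" using phi_pos[OF q s(1)] .
    ultimately have "\<theta> * phi q s * (1 - c * (norm (x - x0))\<^sup>2)\<^sup>2 \<le> phi q s"
      using th mult_mono[of \<theta> 1 "(1 - c * (norm (x - x0))\<^sup>2)\<^sup>2" 1] by (simp add: mult.assoc mult.commute[of "phi q s"] mult_left_le)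
    moreover have "phi q s \<le> u x \<tau>" using del(2)[OF tau(1) tau(2) x] .
    ultimately show "D x \<tau> \<le> 0" unfolding D_def by simp
  next
    fix x t assume x: "dist x0 x = R" and t: "\<tau> \<le> t" "t \<le> t0"
    have "norm (x - x0) = R" using x by (simp add: dist_norm norm_minus_commute)
    then have "1 - c * (norm (x - x0))\<^sup>2 = 0" using R by (simp add: c_def)
    moreover have "u x t > 0" using upos sub x t tau by auto
    ultimately show "D x t \<le> 0" unfolding D_def by simp
  next
    show "x0 \<in> cball x0 R" using R by simp
    show "t0 \<in> {\<tau>..t0}" using tau by simp
  next
    fix x t assume xb: "x \<in> ball x0 R" and t: "\<tau> < t" "t \<le> t0" and Dp: "D x t > 0"
      and mx: "\<forall>y\<in>cball x0 R. \<forall>s\<in>{\<tau>..t0}. D y s \<le> D x t"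
    have xc: "x \<in> cball x0 R" using xb by auto
    have xO: "x \<in> \<Omega>" using xc sub by auto
    have tpos: "t > 0" using t tau by simp
    define \<sigma> where "\<sigma> = t + (s - \<tau>)"
    have sg: "\<sigma> > 0" using t s tau by (simp add: \<sigma>_def)
    define P where "P = phi q \<sigma>"
    have Pp: "P > 0" using phi_pos[OF q sg] by (simp add: P_def)
    define S where "S = (norm (x - x0))\<^sup>2"
    define w where "w = 1 - c * S"
    have wp: "0 < w" "w \<le> 1"
    proof -
      have "norm (x - x0) < R" using xb by (simp add: dist_norm norm_minus_commute)
      then have "S < R\<^sup>2" unfolding S_def by (intro power_strict_mono) auto
      then show "0 < w" using R unfolding w_def c_def by (simp add: field_simps)
      show "w \<le> 1" using cpos unfolding w_def S_def by simp
    qed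
    have dphi: "((\<lambda>t'. phi q (t' + (s - \<tau>))) has_real_derivative - (P powr q)) (at t)"
      using phi_deriv[OF q sg] DERIV_shift[of "phi q" _ t "s - \<tau>"] unfolding P_def \<sigma>_def by simp
    have dg: "((\<lambda>t'. D x t') has_real_derivative \<theta> * (- (P powr q)) * w\<^sup>2 - dt u x t) (at t)"
      unfolding D_def w_def S_def
      by (intro DERIV_diff DERIV_cmult_right DERIV_cmult dphi u_dt[OF sol xO tpos])
    have T: "\<theta> * (- (P powr q)) * w\<^sup>2 - dt u x t \<ge> 0"
    proof (rule time_max_deriv[OF dg, of "t - \<tau>"])
      show "0 < t - \<tau>" using t by simp
      fix h assume "0 < h" "h < t - \<tau>"
      then show "D x (t - h) \<le> D x t" using mx xc t by auto
    qed
    define K where "K = \<theta> * P"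
    have Sp: "K * (8 * c\<^sup>2 * ((x - x0) $ i)\<^sup>2 - 4 * c * w) \<le> dx i (dx i u) x t" for i
    proof -
      define a where "a = (x - x0) $ i"
      define \<rho> where "\<rho> = R - dist x0 x"
      have rho: "\<rho> > 0" using xb by (simp add: \<rho>_def)
      have inb: "x + h *\<^sub>R axis i 1 \<in> ball x0 R" if "\<bar>h\<bar> < \<rho>" for h
        using axis_in_ball[OF xb] that by (simp add: \<rho>_def)
      have nsq: "(norm (x + h *\<^sub>R axis i 1 - x0))\<^sup>2 = S + 2 * h * a + h\<^sup>2" for h
        unfolding S_def a_def by (rule axis_shift_sq)
      have geq: "(\<lambda>h. D (x + h *\<^sub>R axis i 1) t) = (\<lambda>h. K * (1 - c * (S + 2*h*a + h\<^sup>2))\<^sup>2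
          - u (x + h *\<^sub>R axis i 1) t)"
        unfolding D_def nsq K_def P_def \<sigma>_def by simp
      have "K * (8 * c\<^sup>2 * a\<^sup>2 - 4 * c * (1 - c * S)) - dx i (dx i u) x t \<le> 0"
      proof (rule space_max_deriv2[OF rho])
        fix h :: real assume h: "\<bar>h\<bar> < \<rho>"
        show "D (x + h *\<^sub>R axis i 1) t \<le> D (x + 0 *\<^sub>R axis i 1) t"
          using mx inb[OF h] t by auto
        have xh: "x + h *\<^sub>R axis i 1 \<in> \<Omega>" using inb[OF h] sub by (meson ball_subset_cball subsetD)
        show "((\<lambda>h. D (x + h *\<^sub>R axis i 1) t) has_real_derivative
           (K * (2 * (1 - c * (S + 2*h*a + h\<^sup>2)) * (- (c * (2*a + 2*h)))) - dx i u (x + h *\<^sub>R axis i 1) t)) (at h)"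
          unfolding geq
          by (intro DERIV_diff Z_axis1 u_dx[OF sol xh tpos])
      next
        show "((\<lambda>h. K * (2 * (1 - c * (S + 2*h*a + h\<^sup>2)) * (- (c * (2*a + 2*h)))) - dx i u (x + h *\<^sub>R axis i 1) t)
          has_real_derivative K * (8 * c\<^sup>2 * a\<^sup>2 - 4 * c * (1 - c * S)) - dx i (dx i u) x t) (at 0)"
          by (intro DERIV_diff Z_axis2 u_dxx[OF sol xO tpos])
      qed
      then show ?thesis unfolding a_def w_def by simp
    qed
    have lap: "K * (8 * c\<^sup>2 * S - 4 * c * w * N) \<le> laplacian u x t"
    proof -
      have "(\<Sum>i\<in>UNIV. K * (8 * c\<^sup>2 * ((x - x0) $ i)\<^sup>2 - 4 * c * w)) \<le> laplacian u x t"
        unfolding laplacian_def by (intro sum_mono Sp)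
      moreover have "(\<Sum>i\<in>UNIV. K * (8 * c\<^sup>2 * ((x - x0) $ i)\<^sup>2 - 4 * c * w)) = K * (8 * c\<^sup>2 * S - 4 * c * w * N)"
        unfolding S_def norm_sq_sum N_def
        by (simp add: sum_subtractf sum_distrib_left[symmetric] algebra_simps)
      ultimately show ?thesis by simp
    qed
    have si: "(\<theta> * P * w\<^sup>2) powr q \<le> \<theta> * P powr q * w\<^sup>2 + \<theta> * P * (8 * S / R^4 - 4 * N * w / R\<^sup>2)"
    proof (rule sub_ineq[OF q th Pp sg _ wp])
      show "P powr q = P * (1 / (q - 1) / \<sigma>)" unfolding P_def by (rule phi_powq[OF q sg])
      show "S = R\<^sup>2 * (1 - w)" unfolding w_def c_def using R by (simp add: field_simps)
      show "0 \<le> N" by (simp add: N_def)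
      show "0 < R" by (rule R)
      show "T0 = 4 * R\<^sup>2 * (1 / (q - 1)) * (1 - \<theta> powr (q - 1)) / (4 * N + 8)\<^sup>2" using T0 by (simp add: N_def)
      show "\<sigma> \<le> 2 * T0" using t t0 s tau unfolding \<sigma>_def by simp
    qed
    have ceq: "K * (8 * c\<^sup>2 * S - 4 * c * w * N) = \<theta> * P * (8 * S / R^4 - 4 * N * w / R\<^sup>2)"
      unfolding K_def c_def by (simp add: field_simps power2_eq_square power4_eq_xxxx)
    have e1: "dt u x t - laplacian u x t + u x t powr q = 0" using eq xO tpos by blast
    have Zu: "\<theta> * P * w\<^sup>2 > u x t" using Dp unfolding D_def P_def \<sigma>_def w_def S_def by simp
    have up: "u x t > 0" using upos xO tpos by blast
    have "u x t powr q < (\<theta> * P * w\<^sup>2) powr q"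
      using Zu up q by (intro powr_less_mono2) auto
    then show False using si ceq lap T e1 by simp
  qed
  moreover have "phi q (t0 + s) \<le> phi q (t0 + (s - \<tau>))"
    using phi_mono[OF q, of "t0 + (s - \<tau>)" "t0 + s"] tau s by simp
  then have "\<theta> * phi q (t0 + s) \<le> \<theta> * phi q (t0 + (s - \<tau>))" using th by (intro mult_left_mono) auto
  ultimately show ?thesis unfolding D_def by simp
qed



lemma lower:
  fixes u :: "real ^ 'n::finite \<Rightarrow> real \<Rightarrow> real"
  assumes q: "q > 1" and sol: "C21 \<Omega> u" and upos: "\<forall>x\<in>\<Omega>. \<forall>t>0. u x t > 0"
    and eq: "\<forall>x\<in>\<Omega>. \<forall>t>0. dt u x t - laplacian u x t + u x t powr q = 0"
    and R: "R > 0" and sub: "cball x0 R \<subseteq> \<Omega>"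
    and blow: "\<forall>M. \<exists>\<delta>>0. \<forall>t. 0 < t \<and> t < \<delta> \<longrightarrow> (\<forall>x\<in>cball x0 R. M \<le> u x t)"
    and th: "0 < \<theta>" "\<theta> < 1"
    and T0: "T0 = 4 * R\<^sup>2 * (1 / (q - 1)) * (1 - \<theta> powr (q - 1)) / (4 * real CARD('n) + 8)\<^sup>2"
    and t0: "0 < t0" "t0 < T0"
  shows "\<theta> * phi q t0 \<le> u x0 t0"
proof -
  have "isCont (phi q) t0"
    using phi_cont[OF q] t0 continuous_on_eq_continuous_at[of "{0<..}" "phi q"] by auto
  moreover have "((\<lambda>s. t0 + s) \<longlongrightarrow> t0) (at_right 0)"
    by (auto intro!: tendsto_eq_intros)
  ultimately have "((\<lambda>s. phi q (t0 + s)) \<longlongrightarrow> phi q t0) (at_right 0)"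
    by (rule isCont_tendsto_compose)
  then have lim: "((\<lambda>s. \<theta> * phi q (t0 + s)) \<longlongrightarrow> \<theta> * phi q t0) (at_right 0)"
    by (intro tendsto_intros)
  have T0p: "T0 > 0" using t0 by simp
  have ev: "eventually (\<lambda>s. \<theta> * phi q (t0 + s) \<le> u x0 t0) (at_right 0)"
    unfolding eventually_at_right_field
    using lower_s[OF q sol upos eq R sub blow th T0 t0] T0p by (intro exI[of _ T0]) auto
  show ?thesis
    by (rule tendsto_le[OF trivial_limit_at_right_real tendsto_const lim ev])
qed

theorem lemma3p2:
  fixes q :: real and \<Omega> :: "(real ^ 'n::finite) set" and u :: "real ^ 'n \<Rightarrow> real \<Rightarrow> real"
  assumes "q > 1"
    and "open \<Omega>" and "connected \<Omega>"
    and "large_initial_solution q \<Omega> u"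
  shows "\<forall>G. bounded G \<and> open G \<and> closure G \<subseteq> \<Omega> \<longrightarrow>
           uniform_limit G (\<lambda>t x. t powr (1 / (q - 1)) * u x t)
             (\<lambda>x. (1 / (q - 1)) powr (1 / (q - 1))) (at_right 0)"
proof (intro allI impI)
  fix G :: "(real ^ 'n) set"
  assume G: "bounded G \<and> open G \<and> closure G \<subseteq> \<Omega>"
  have q: "q > 1" by fact
  have sol: "C21 \<Omega> u" and upos: "\<forall>x\<in>\<Omega>. \<forall>t>0. u x t > 0"
    and eq: "\<forall>x\<in>\<Omega>. \<forall>t>0. dt u x t - laplacian u x t + u x t powr q = 0"
    and blowK: "\<And>K. compact K \<Longrightarrow> K \<subseteq> \<Omega> \<Longrightarrow>
        (\<forall>M. \<exists>\<delta>>0. \<forall>t. 0 < t \<and> t < \<delta> \<longrightarrow> (\<forall>x\<in>K. u x t \<ge> M))"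
    using assms(4) unfolding large_initial_solution_def by auto
  define K0 where "K0 = closure G"
  have K0c: "compact K0" using G by (simp add: K0_def compact_closure)
  have K0O: "K0 \<subseteq> \<Omega>" using G by (simp add: K0_def)
  obtain d where d: "d > 0" "\<And>x y. x \<in> K0 \<Longrightarrow> y \<in> - \<Omega> \<Longrightarrow> d \<le> dist x y"
  proof -
    have "K0 \<inter> - \<Omega> = {}" using K0O by blast
    moreover have "closed (- \<Omega>)" using assms(2) by (simp add: closed_Compl)
    ultimately have "\<exists>\<delta>>0. \<forall>x\<in>K0. \<forall>y\<in>- \<Omega>. \<delta> \<le> dist x y"
      using separate_compact_closed[OF K0c] by blast
    then show ?thesis using that by blast
  qed
  define R where "R = d / 2"
  have R: "R > 0" using d by (simp add: R_def)
  have ballO: "cball x0 R \<subseteq> \<Omega>" if "x0 \<in> K0" for x0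
  proof
    fix y assume "y \<in> cball x0 R"
    then have "dist x0 y < d" using d by (simp add: R_def)
    then show "y \<in> \<Omega>" using d(2)[OF that, of y] by force
  qed
  define Kc where "Kc = (\<lambda>p. fst p + snd p) ` (K0 \<times> cball (0 :: real ^ 'n) R)"
  have Kcc: "compact Kc" unfolding Kc_def
    by (intro compact_continuous_image compact_Times K0c compact_cball continuous_intros)
  have ballK: "cball x0 R \<subseteq> Kc" if "x0 \<in> K0" for x0
  proof
    fix y assume y: "y \<in> cball x0 R"
    have "y = fst (x0, y - x0) + snd (x0, y - x0)" by simp
    moreover have "(x0, y - x0) \<in> K0 \<times> cball 0 R" using that y by (simp add: dist_norm norm_minus_commute)
    ultimately show "y \<in> Kc" unfolding Kc_def by blast
  qed
  have KcO: "Kc \<subseteq> \<Omega>"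
  proof
    fix y assume "y \<in> Kc"
    then obtain x0 b where "x0 \<in> K0" "b \<in> cball 0 R" "y = x0 + b" unfolding Kc_def by auto
    then have "y \<in> cball x0 R" by (simp add: dist_norm)
    then show "y \<in> \<Omega>" using ballO \<open>x0 \<in> K0\<close> by blast
  qed
  have blow: "\<forall>M. \<exists>\<delta>>0. \<forall>t. 0 < t \<and> t < \<delta> \<longrightarrow> (\<forall>x\<in>cball x0 R. M \<le> u x t)" if "x0 \<in> K0" for x0
    using blowK[OF Kcc KcO] ballK[OF that] by (meson subsetD)
  define \<beta> where "\<beta> = 1 / (q - 1)"
  define c where "c = (1 / (q - 1)) powr (1 / (q - 1))"
  have bp: "\<beta> > 0" using q by (simp add: \<beta>_def)
  have cp: "c > 0" using q by (simp add: c_def)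
  define al where "al = 2 / (q - 1)"
  define C where "C = 4*al*(al+1) + 2*real CARD('n)*al"
  define lam where "lam = (C * R\<^sup>2) powr (1 / (q - 1))"
  define Cup where "Cup = lam * (R\<^sup>2) powr (- al)"
  have Cup: "Cup \<ge> 0" by (simp add: Cup_def lam_def)
  show "uniform_limit G (\<lambda>t x. t powr (1 / (q - 1)) * u x t)
             (\<lambda>x. (1 / (q - 1)) powr (1 / (q - 1))) (at_right 0)"
    unfolding uniform_limit_iff
  proof (intro allI impI)
    fix e :: real assume e: "e > 0"
    define \<theta> where "\<theta> = 1 - min (1/2) (e / (2 * c))"
    have th: "0 < \<theta>" "\<theta> < 1" using e cp by (auto simp: \<theta>_def)
    have "c * min (1/2) (e / (2 * c)) \<le> c * (e / (2 * c))" using cp by (intro mult_left_mono) auto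
    also have "c * (e / (2 * c)) = e / 2" using cp by simp
    finally have thc: "\<theta> * c \<ge> c - e / 2" unfolding \<theta>_def by (simp add: algebra_simps)
    define T0 where "T0 = 4 * R\<^sup>2 * (1 / (q - 1)) * (1 - \<theta> powr (q - 1)) / (4 * real CARD('n) + 8)\<^sup>2"
    have "\<theta> powr (q - 1) < 1 powr (q - 1)" using th q by (intro powr_less_mono2) auto
    then have T0p: "T0 > 0" using R q by (simp add: T0_def)
    define tb where "tb = (e / (Cup + 1)) powr (1 / \<beta>)"
    have tbp: "tb > 0" using e Cup by (simp add: tb_def)
    show "\<forall>\<^sub>F t in at_right 0. \<forall>x\<in>G. dist (t powr (1 / (q - 1)) * u x t) ((1 / (q - 1)) powr (1 / (q - 1))) < e"
      unfolding eventually_at_right_field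
    proof (intro exI[of _ "min T0 tb"] conjI allI impI ballI)
      show "0 < min T0 tb" using T0p tbp by simp
      fix t :: real and x assume t: "0 < t" "t < min T0 tb" and x: "x \<in> G"
      have xK: "x \<in> K0" using x by (simp add: K0_def closure_subset[THEN subsetD])
      have sc: "t powr \<beta> * phi q t = c" using phi_scale[OF q t(1)] by (simp add: \<beta>_def c_def)
      have tp: "t powr \<beta> > 0" using t by simp
      have lo: "\<theta> * phi q t \<le> u x t"
        by (rule lower[OF q sol upos eq R ballO[OF xK] blow[OF xK] th T0_def]) (use t in auto)
      have up: "u x t \<le> phi q t + Cup"
        unfolding Cup_def by (rule upper[OF q sol upos eq R ballO[OF xK] t(1) al_def C_def lam_def])
      have "t powr \<beta> < tb powr \<beta>" using t bp by (intro powr_less_mono2) auto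
      also have "tb powr \<beta> = e / (Cup + 1)" unfolding tb_def using e Cup bp by (simp add: powr_powr)
      finally have tbe: "t powr \<beta> < e / (Cup + 1)" .
      have "t powr \<beta> * Cup \<le> e / (Cup + 1) * Cup" using tbe Cup by (intro mult_right_mono) auto
      also have "\<dots> < e" using e Cup by (simp add: field_simps)
      finally have ub: "t powr \<beta> * Cup < e" .
      have l1: "t powr \<beta> * u x t \<ge> \<theta> * c"
        using mult_left_mono[OF lo, of "t powr \<beta>"] tp sc by (simp add: algebra_simps)
      have u1: "t powr \<beta> * u x t \<le> c + t powr \<beta> * Cup"
        using mult_left_mono[OF up, of "t powr \<beta>"] tp sc by (simp add: algebra_simps)
      have fin: "\<bar>t powr \<beta> * u x t - c\<bar> < e" using l1 u1 ub thc e by linarith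
      show "dist (t powr (1 / (q - 1)) * u x t) ((1 / (q - 1)) powr (1 / (q - 1))) < e"
        unfolding dist_real_def using fin unfolding c_def \<beta>_def .
    qed
  qed
qed


end
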